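(* Consider the following repeated procedure with threshold $\omega>0$. Start from some $\lambda_1 \in \mathbb{R}^m_+$. At each round $t=1,2,\dots$: (1) let $\pi_t \in \Pi$ be a deterministic policy that is a best response, i.e. $\pi_t \in \arg\max_{\pi \in \mathrm{Conv}(\Pi)} L(\pi,\lambda_t)$; (2) let $\hat\pi_t$ be the mixed policy putting weight $1/t$ on each of $\pi_1,\dots,\pi_t$ and $\hat\lambda_t = \frac1t\sum_{t'=1}^t \lambda_{t'}$; (3) compute exactly $L_{\max} = \max_{\pi} L(\pi, \hat\lambda_t)$ (the value at a best response to $\hat\lambda_t$) and $L_{\min} = \min_{\lambda \in \mathbb{R}^m_+} L(\hat\pi_t, \lambda)$; (4) if $L_{\max} - L_{\min} < \omega$, return $\hat\pi_t$; (5) otherwise let $\lambda_{t+1}$ be produced by an online algorithm from $\pi_1,\dots,\pi_t$, where this online algorithm is no-regret with respect to the losses $-L(\pi_t,\cdot)$: for every $T$, $\sum_{t=1}^T (-L)(\pi_t,\lambda_t) \ge \max_{\lambda \in \mathbb{R}^m_+} \sum_{t=1}^T (-L)(\pi_t,\lambda) - R(T)$ with $R(T) = o(T)$. Then this procedure is guaranteed to converge, i.e. it terminates after finitely many rounds; its convergence rate is governed by the regret $R(T)$ of the online algorithm (the duality gap $L_{\max}-L_{\min}$ at round $T$ is at most $R(T)/T$).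
   Context: Setting: finite $\mathcal{S},\mathcal{A}$, $\gamma\in[0,1)$, initial distribution $\mu$, an $(s,a)$-rectangular uncertainty set $\mathcal{P} = \otimes_{(s,a)}\mathcal{P}_{s,a}$ with $\mathcal{P}_{s,a} = \{P \in \Delta(\mathcal{S}): D(P,P^o_{s,a}) \le \beta_{s,a}\}$ around a nominal kernel $P^o$ (minima over these sets taken to be attained), reward $r:\mathcal{S}\times\mathcal{A}\to[0,\bar R]$, constraint rewards $g_i:\mathcal{S}\times\mathcal{A}\to[0,\tau_i]$ ($i=1,\dots,m$) with thresholds $\tau$. $\Pi$ is the class of deterministic stationary policies. For a reward $u$ and $\pi\in\Pi$, $V^\pi_u(s) = \min_{\mathcal{K}\in\otimes_{t\ge0}\mathcal{P}}\mathbb{E}_{\mathcal{K}}[\sum_{t\ge0}\gamma^t u(s_t,a_t)\mid s_0=s,\pi]$ (worst case over sequences of kernels from $\mathcal{P}$, one per time step), $V^\pi_u(\mu)=\langle V^\pi_u,\mu\rangle$, $V^\pi_g = (V^\pi_{g_1},\dots,V^\pi_{g_m})^\top$. $\mathrm{Conv}(\Pi)$ is the set of mixed policies (categorical distributions over finitely many deterministic policies, one sampled per episode), with robust value the corresponding weighted average of robust values. The Lagrangian is $L(\pi,\lambda) = V^\pi_r(\mu) - \lambda^\top(V^\pi_g(\mu)-\tau)$ for $\pi\in\mathrm{Conv}(\Pi)$, $\lambda\in\mathbb{R}^m_+$; it is linear in the mixture weights and in $\lambda$. *)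

theory Defs
  imports "HOL-Analysis.Analysis" "HOL-Library.Landau_Symbols"
begin

text \<open>Transition kernels are functions
  P s a s' (probability of moving to s' from s under action a).\<close>

definition prob_vec :: "('s::finite \<Rightarrow> real) \<Rightarrow> bool" where
  "prob_vec p \<longleftrightarrow> (\<forall>s. 0 \<le> p s) \<and> sum p UNIV = 1"

definition unc_set ::
  "(('s::finite \<Rightarrow> real) \<Rightarrow> ('s \<Rightarrow> real) \<Rightarrow> real) \<Rightarrow> ('s \<Rightarrow> 'a \<Rightarrow> real)
   \<Rightarrow> ('s \<Rightarrow> 'a \<Rightarrow> 's \<Rightarrow> real) \<Rightarrow> ('s \<Rightarrow> 'a \<Rightarrow> 's \<Rightarrow> real) set" where
  "unc_set D \<beta> P0 = {P. \<forall>s a. prob_vec (P s a) \<and> D (P s a) (P0 s a) \<le> \<beta> s a}"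

fun state_dist ::
  "(nat \<Rightarrow> 's::finite \<Rightarrow> 'a \<Rightarrow> 's \<Rightarrow> real) \<Rightarrow> ('s \<Rightarrow> 'a) \<Rightarrow> 's \<Rightarrow> nat \<Rightarrow> 's \<Rightarrow> real" where
  "state_dist K pol s0 0 = (\<lambda>s. if s = s0 then 1 else 0)"
| "state_dist K pol s0 (Suc t) = (\<lambda>s'. \<Sum>s\<in>UNIV. state_dist K pol s0 t s * K t s (pol s) s')"

definition disc_return ::
  "real \<Rightarrow> (nat \<Rightarrow> 's::finite \<Rightarrow> 'a \<Rightarrow> 's \<Rightarrow> real) \<Rightarrow> ('s \<Rightarrow> 'a) \<Rightarrow> ('s \<Rightarrow> 'a \<Rightarrow> real) \<Rightarrow> 's \<Rightarrow> real" where
  "disc_return \<gamma> K pol u s0 =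
     (\<Sum>t. \<gamma> ^ t * (\<Sum>s\<in>UNIV. state_dist K pol s0 t s * u s (pol s)))"

definition robust_value ::
  "real \<Rightarrow> (('s::finite \<Rightarrow> real) \<Rightarrow> ('s \<Rightarrow> real) \<Rightarrow> real) \<Rightarrow> ('s \<Rightarrow> 'a \<Rightarrow> real)
   \<Rightarrow> ('s \<Rightarrow> 'a \<Rightarrow> 's \<Rightarrow> real) \<Rightarrow> ('s \<Rightarrow> 'a \<Rightarrow> real) \<Rightarrow> ('s \<Rightarrow> 'a) \<Rightarrow> 's \<Rightarrow> real" where
  "robust_value \<gamma> D \<beta> P0 u pol s0 =
     Inf {disc_return \<gamma> K pol u s0 | K. \<forall>t. K t \<in> unc_set D \<beta> P0}"

definition robust_value_init ::
  "real \<Rightarrow> (('s::finite \<Rightarrow> real) \<Rightarrow> ('s \<Rightarrow> real) \<Rightarrow> real) \<Rightarrow> ('s \<Rightarrow> 'a \<Rightarrow> real)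
   \<Rightarrow> ('s \<Rightarrow> 'a \<Rightarrow> 's \<Rightarrow> real) \<Rightarrow> ('s \<Rightarrow> real) \<Rightarrow> ('s \<Rightarrow> 'a \<Rightarrow> real) \<Rightarrow> ('s \<Rightarrow> 'a) \<Rightarrow> real" where
  "robust_value_init \<gamma> D \<beta> P0 \<mu> u pol = (\<Sum>s\<in>UNIV. robust_value \<gamma> D \<beta> P0 u pol s * \<mu> s)"

text \<open>Mixed policies: categorical distributions over the (finite) set of deterministic policies.\<close>
definition mixed_policy :: "(('s::finite \<Rightarrow> 'a::finite) \<Rightarrow> real) \<Rightarrow> bool" where
  "mixed_policy w \<longleftrightarrow> (\<forall>p. 0 \<le> w p) \<and> sum w UNIV = 1"

definition det_mix :: "('s \<Rightarrow> 'a) \<Rightarrow> (('s \<Rightarrow> 'a) \<Rightarrow> real)" where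
  "det_mix p = (\<lambda>q. if q = p then 1 else 0)"

definition mixed_value ::
  "real \<Rightarrow> (('s::finite \<Rightarrow> real) \<Rightarrow> ('s \<Rightarrow> real) \<Rightarrow> real) \<Rightarrow> ('s \<Rightarrow> 'a::finite \<Rightarrow> real)
   \<Rightarrow> ('s \<Rightarrow> 'a \<Rightarrow> 's \<Rightarrow> real) \<Rightarrow> ('s \<Rightarrow> real) \<Rightarrow> ('s \<Rightarrow> 'a \<Rightarrow> real) \<Rightarrow> (('s \<Rightarrow> 'a) \<Rightarrow> real) \<Rightarrow> real" where
  "mixed_value \<gamma> D \<beta> P0 \<mu> u w = (\<Sum>p\<in>UNIV. w p * robust_value_init \<gamma> D \<beta> P0 \<mu> u p)"

definition lagrangian ::
  "real \<Rightarrow> (('s::finite \<Rightarrow> real) \<Rightarrow> ('s \<Rightarrow> real) \<Rightarrow> real) \<Rightarrow> ('s \<Rightarrow> 'a::finite \<Rightarrow> real)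
   \<Rightarrow> ('s \<Rightarrow> 'a \<Rightarrow> 's \<Rightarrow> real) \<Rightarrow> ('s \<Rightarrow> real) \<Rightarrow> ('s \<Rightarrow> 'a \<Rightarrow> real)
   \<Rightarrow> ('i::finite \<Rightarrow> 's \<Rightarrow> 'a \<Rightarrow> real) \<Rightarrow> ('i \<Rightarrow> real)
   \<Rightarrow> (('s \<Rightarrow> 'a) \<Rightarrow> real) \<Rightarrow> ('i \<Rightarrow> real) \<Rightarrow> real" where
  "lagrangian \<gamma> D \<beta> P0 \<mu> r g \<tau> w lam =
     mixed_value \<gamma> D \<beta> P0 \<mu> r w
     - (\<Sum>i\<in>UNIV. lam i * (mixed_value \<gamma> D \<beta> P0 \<mu> (g i) w - \<tau> i))"

end

theory Submission
  imports Defs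
begin


lemma mv_det: "mixed_value \<gamma> D \<beta> P0 \<mu> u (det_mix p) = robust_value_init \<gamma> D \<beta> P0 \<mu> u p"
proof -
  have "mixed_value \<gamma> D \<beta> P0 \<mu> u (det_mix p)
     = (\<Sum>q\<in>UNIV. if q = p then robust_value_init \<gamma> D \<beta> P0 \<mu> u q else 0)"
    unfolding mixed_value_def det_mix_def by (intro sum.cong) auto
  then show ?thesis by simp
qed

lemma lag_affine_w:
  assumes "sum w UNIV = 1"
  shows "lagrangian \<gamma> D \<beta> P0 \<mu> r g \<tau> w l
    = (\<Sum>p\<in>UNIV. w p * lagrangian \<gamma> D \<beta> P0 \<mu> r g \<tau> (det_mix p) l)"
proof -
  define V where "V = robust_value_init \<gamma> D \<beta> P0 \<mu>"
  have e1: "(\<Sum>p\<in>UNIV. w p * lagrangian \<gamma> D \<beta> P0 \<mu> r g \<tau> (det_mix p) l)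
     = (\<Sum>p\<in>UNIV. w p * V r p - (\<Sum>i\<in>UNIV. w p * (l i * (V (g i) p - \<tau> i))))"
    unfolding lagrangian_def mv_det V_def
    by (intro sum.cong refl) (simp only: right_diff_distrib sum_distrib_left)
  have e2: "\<dots> = (\<Sum>p\<in>UNIV. w p * V r p) - (\<Sum>p\<in>UNIV. \<Sum>i\<in>UNIV. w p * (l i * (V (g i) p - \<tau> i)))"
    by (rule sum_subtractf)
  have e3: "(\<Sum>p\<in>UNIV. \<Sum>i\<in>UNIV. w p * (l i * (V (g i) p - \<tau> i)))
      = (\<Sum>i\<in>UNIV. \<Sum>p\<in>UNIV. w p * (l i * (V (g i) p - \<tau> i)))"
    by (rule sum.swap)
  have e4: "(\<Sum>p\<in>UNIV. w p * (l i * (V (g i) p - \<tau> i)))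
      = l i * ((\<Sum>p\<in>UNIV. w p * V (g i) p) - \<tau> i)" for i
  proof -
    have "(\<Sum>p\<in>UNIV. w p * (l i * (V (g i) p - \<tau> i)))
        = (\<Sum>p\<in>UNIV. l i * (w p * V (g i) p) - l i * \<tau> i * w p)"
      by (intro sum.cong refl) (simp add: algebra_simps)
    also have "\<dots> = l i * (\<Sum>p\<in>UNIV. w p * V (g i) p) - l i * \<tau> i * (\<Sum>p\<in>UNIV. w p)"
      by (simp only: sum_subtractf sum_distrib_left)
    also have "\<dots> = l i * ((\<Sum>p\<in>UNIV. w p * V (g i) p) - \<tau> i)"
      using assms by (simp add: algebra_simps)
    finally show ?thesis .
  qed
  show ?thesis
    unfolding e1 e2 e3 e4 unfolding lagrangian_def mixed_value_def V_def ..
qed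

lemma lag_affine_l:
  assumes "finite S" "card S = T" "T > 0"
  shows "lagrangian \<gamma> D \<beta> P0 \<mu> r g \<tau> w (\<lambda>i. (\<Sum>t\<in>S. lam t i) / real T)
    = (\<Sum>t\<in>S. lagrangian \<gamma> D \<beta> P0 \<mu> r g \<tau> w (lam t)) / real T"
proof -
  define A where "A = mixed_value \<gamma> D \<beta> P0 \<mu> r w"
  define c where "c = (\<lambda>i. mixed_value \<gamma> D \<beta> P0 \<mu> (g i) w - \<tau> i)"
  have "(\<Sum>t\<in>S. A - (\<Sum>i\<in>UNIV. lam t i * c i)) = real T * A - (\<Sum>i\<in>UNIV. (\<Sum>t\<in>S. lam t i) * c i)"
    using assms by (simp add: sum_subtractf sum_distrib_right sum.swap[of _ S UNIV])
  then have "(\<Sum>t\<in>S. A - (\<Sum>i\<in>UNIV. lam t i * c i)) / real T = A - (\<Sum>i\<in>UNIV. (\<Sum>t\<in>S. lam t i) / real T * c i)"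
  proof -
    have "(\<Sum>i\<in>UNIV. (\<Sum>t\<in>S. lam t i) / real T * c i) = (\<Sum>i\<in>UNIV. (\<Sum>t\<in>S. lam t i) * c i / real T)"
      by (intro sum.cong) auto
    also have "\<dots> = (\<Sum>i\<in>UNIV. (\<Sum>t\<in>S. lam t i) * c i) / real T"
      by (rule sum_divide_distrib[symmetric])
    finally have "(\<Sum>i\<in>UNIV. (\<Sum>t\<in>S. lam t i) / real T * c i) = (\<Sum>i\<in>UNIV. (\<Sum>t\<in>S. lam t i) * c i) / real T" .
    moreover have "real T * A / real T = A" using assms by simp
    ultimately show ?thesis using \<open>(\<Sum>t\<in>S. A - (\<Sum>i\<in>UNIV. lam t i * c i)) = _\<close>
      by (simp add: diff_divide_distrib)
  qed
  then show ?thesis unfolding lagrangian_def A_def c_def by simp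
qed

lemma hat_sum:
  fixes \<pi> :: "nat \<Rightarrow> ('s::finite \<Rightarrow> 'a::finite)"
  shows "(\<Sum>p\<in>UNIV. real (card {t\<in>{1..T}. \<pi> t = p}) / real T * f p) = (\<Sum>t=1..T. f (\<pi> t)) / real T"
proof -
  have c: "real (card {t\<in>{1..T}. \<pi> t = p}) = (\<Sum>t=1..T. if \<pi> t = p then 1 else 0)" for p
  proof -
    have "{t\<in>{1..T}. \<pi> t = p} = {1..T} \<inter> {t. \<pi> t = p}" by auto
    then show ?thesis by (simp add: sum.If_cases)
  qed
  have "(\<Sum>p\<in>UNIV. real (card {t\<in>{1..T}. \<pi> t = p}) / real T * f p)
      = (\<Sum>p\<in>UNIV. (\<Sum>t=1..T. (if \<pi> t = p then f p else 0))) / real T"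
  proof -
    have e: "real (card {t\<in>{1..T}. \<pi> t = p}) / real T * f p
        = (\<Sum>t=1..T. (if \<pi> t = p then f p else 0)) / real T" for p
    proof -
      have "(\<Sum>t=1..T. (if \<pi> t = p then 1 else 0)) * f p = (\<Sum>t=1..T. (if \<pi> t = p then f p else 0))"
        unfolding sum_distrib_right by (intro sum.cong) auto
      then show ?thesis unfolding c by simp
    qed
    show ?thesis unfolding e by (rule sum_divide_distrib[symmetric])
  qed
  also have "\<dots> = (\<Sum>t=1..T. f (\<pi> t)) / real T"
    by (subst sum.swap) simp
  finally show ?thesis .
qed

theorem proposition2:
  fixes \<gamma> :: real
    and \<mu> :: "'s::finite \<Rightarrow> real"
    and D :: "('s \<Rightarrow> real) \<Rightarrow> ('s \<Rightarrow> real) \<Rightarrow> real"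
    and \<beta> :: "'s \<Rightarrow> 'a::finite \<Rightarrow> real"
    and P0 :: "'s \<Rightarrow> 'a \<Rightarrow> 's \<Rightarrow> real"
    and r :: "'s \<Rightarrow> 'a \<Rightarrow> real" and Rbar :: real
    and g :: "'i::finite \<Rightarrow> 's \<Rightarrow> 'a \<Rightarrow> real" and \<tau> :: "'i \<Rightarrow> real"
    and \<omega> :: real
    and alg :: "('s \<Rightarrow> 'a) list \<Rightarrow> ('i \<Rightarrow> real)"
    and \<pi> :: "nat \<Rightarrow> ('s \<Rightarrow> 'a)"
    and lam :: "nat \<Rightarrow> ('i \<Rightarrow> real)"
    and R :: "nat \<Rightarrow> real"
    and L :: "(('s \<Rightarrow> 'a) \<Rightarrow> real) \<Rightarrow> ('i \<Rightarrow> real) \<Rightarrow> real"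
    and hat_pi :: "nat \<Rightarrow> (('s \<Rightarrow> 'a) \<Rightarrow> real)"
    and hat_lam :: "nat \<Rightarrow> ('i \<Rightarrow> real)"
    and gap :: "nat \<Rightarrow> ereal"
  defines "L \<equiv> lagrangian \<gamma> D \<beta> P0 \<mu> r g \<tau>"
    and "hat_pi \<equiv> (\<lambda>T p. real (card {t\<in>{1..T}. \<pi> t = p}) / real T)"
    and "hat_lam \<equiv> (\<lambda>T i. (\<Sum>t=1..T. lam t i) / real T)"
    and "gap \<equiv> (\<lambda>T. (SUP w\<in>{w. mixed_policy w}. ereal (L w (hat_lam T)))
                    - (INF l\<in>{l. \<forall>i. 0 \<le> l i}. ereal (L (hat_pi T) l)))"
  assumes gamma: "0 \<le> \<gamma>" "\<gamma> < 1"
    and mu: "prob_vec \<mu>"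
    and nominal: "\<forall>s a. prob_vec (P0 s a)"
    and radius: "\<forall>s a. 0 \<le> \<beta> s a"
    and reward: "\<forall>s a. 0 \<le> r s a \<and> r s a \<le> Rbar"
    and constr: "\<forall>i s a. 0 \<le> g i s a \<and> g i s a \<le> \<tau> i"
    and omega: "0 < \<omega>"
    and lam1: "\<forall>i. 0 \<le> lam 1 i"
    and alg_nonneg: "\<forall>h i. 0 \<le> alg h i"
    and alg_step: "\<forall>t\<ge>1. lam (Suc t) = alg (map \<pi> [1..<Suc t])"
    and best_resp: "\<forall>t\<ge>1. \<forall>w. mixed_policy w \<longrightarrow> L w (lam t) \<le> L (det_mix (\<pi> t)) (lam t)"
    and no_regret: "\<forall>T\<ge>1. \<forall>l. (\<forall>i. 0 \<le> l i) \<longrightarrow>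
        (\<Sum>t=1..T. - L (det_mix (\<pi> t)) (lam t)) \<ge> (\<Sum>t=1..T. - L (det_mix (\<pi> t)) l) - R T"
    and sublinear: "R \<in> o(\<lambda>T. real T)"
  shows "(\<forall>T\<ge>1. gap T \<le> ereal (R T / real T)) \<and> (\<exists>T\<ge>1. gap T < ereal \<omega>)"
  proof -
  have Lw: "L w l = (\<Sum>p\<in>UNIV. w p * L (det_mix p) l)" if "sum w UNIV = 1" for w :: "('s \<Rightarrow> 'a) \<Rightarrow> real" and l
    unfolding L_def using lag_affine_w[OF that] .
  have hpsum: "sum (hat_pi T) UNIV = 1" if "T \<ge> 1" for T
  proof -
    have "sum (hat_pi T) UNIV = (\<Sum>p\<in>UNIV. hat_pi T p * 1)" by simp
    also have "\<dots> = (\<Sum>t=1..T. 1) / real T" unfolding hat_pi_def by (rule hat_sum)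
    finally show ?thesis using that by simp
  qed
  have Lhp: "L (hat_pi T) l = (\<Sum>t=1..T. L (det_mix (\<pi> t)) l) / real T" if "T \<ge> 1" for T l
    unfolding Lw[OF hpsum[OF that]] unfolding hat_pi_def by (rule hat_sum)
  have Lhl: "L w (hat_lam T) = (\<Sum>t=1..T. L w (lam t)) / real T" if "T \<ge> 1" for T and w :: "('s \<Rightarrow> 'a) \<Rightarrow> real"
    unfolding hat_lam_def L_def using that by (intro lag_affine_l) auto
  have part1: "gap T \<le> ereal (R T / real T)" if T: "T \<ge> 1" for T
  proof -
    define a where "a = (\<Sum>t=1..T. L (det_mix (\<pi> t)) (lam t)) / real T"
    have sup: "(SUP w\<in>{w. mixed_policy w}. ereal (L w (hat_lam T))) \<le> ereal a"
    proof (rule SUP_least)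
      fix w :: "('s \<Rightarrow> 'a) \<Rightarrow> real" assume "w \<in> {w. mixed_policy w}"
      then have mw: "mixed_policy w" by simp
      have "(\<Sum>t=1..T. L w (lam t)) \<le> (\<Sum>t=1..T. L (det_mix (\<pi> t)) (lam t))"
      proof (rule sum_mono)
        fix t assume "t \<in> {1..T}"
        then have "t \<ge> 1" by simp
        then show "L w (lam t) \<le> L (det_mix (\<pi> t)) (lam t)" using best_resp mw by blast
      qed
      then show "ereal (L w (hat_lam T)) \<le> ereal a"
        unfolding Lhl[OF T] a_def using T by (simp add: divide_right_mono)
    qed
    have inf: "ereal (a - R T / real T) \<le> (INF l\<in>{l. \<forall>i. 0 \<le> l i}. ereal (L (hat_pi T) l))"
    proof (rule INF_greatest)
      fix l :: "'i \<Rightarrow> real" assume "l \<in> {l. \<forall>i. 0 \<le> l i}"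
      then have nr: "(\<Sum>t=1..T. - L (det_mix (\<pi> t)) (lam t)) \<ge> (\<Sum>t=1..T. - L (det_mix (\<pi> t)) l) - R T"
        using no_regret T \<open>l \<in> {l. \<forall>i. 0 \<le> l i}\<close> unfolding mem_Collect_eq by blast
      have "(\<Sum>t=1..T. L (det_mix (\<pi> t)) (lam t)) - R T \<le> (\<Sum>t=1..T. L (det_mix (\<pi> t)) l)"
        using nr by (simp add: sum_negf)
      then have "((\<Sum>t=1..T. L (det_mix (\<pi> t)) (lam t)) - R T) / real T \<le> (\<Sum>t=1..T. L (det_mix (\<pi> t)) l) / real T"
        by (simp add: divide_right_mono)
      then show "ereal (a - R T / real T) \<le> ereal (L (hat_pi T) l)"
        unfolding Lhp[OF T] a_def by (simp add: diff_divide_distrib)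
    qed
    have "gap T \<le> ereal a - ereal (a - R T / real T)"
      unfolding gap_def by (rule ereal_minus_mono[OF sup inf])
    then show ?thesis by simp
  qed
  have hw: "0 < \<omega> / 2" using omega by simp
  from landau_o.smallD[OF sublinear hw] obtain N where
    N: "\<And>T. T \<ge> N \<Longrightarrow> norm (R T) \<le> \<omega> / 2 * norm (real T)"
    unfolding eventually_at_top_linorder by blast
  define T where "T = max N 1"
  have T1: "T \<ge> 1" and TN: "T \<ge> N" unfolding T_def by auto
  have "R T \<le> \<omega> / 2 * real T" using N[OF TN] by simp
  moreover have "real T > 0" using T1 by simp
  ultimately have "R T / real T \<le> \<omega> / 2" by (simp add: pos_divide_le_eq)
  then have "R T / real T < \<omega>" using omega by linarith
  then have "ereal (R T / real T) < ereal \<omega>" by simp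
  then have "gap T < ereal \<omega>" by (rule order_le_less_trans[OF part1[OF T1]])
  then show ?thesis using part1 T1 by blast
qed

end
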